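(* Let $\gamma = 32\,\Delta\, s_{\max}^2/\lambda_2$, where $\lambda_2$ is the second smallest eigenvalue of the Laplacian of $G$. Then for every $t\ge 1$ (and any distribution of the initial state $X^0$), \[ \mathbb{E}[\Psi_0(X^t)] \le \left(1-\frac{2}{\gamma}\right)\mathbb{E}[\Psi_0(X^{t-1})] + \frac{n}{4 s_{\max}}. \]
   Context: $G=(V,E)$ is a connected undirected graph on $n\ge2$ vertices (processors) with maximum degree $\Delta$; $\deg(i)$ is the degree and $d_{ij}=\max\{\deg(i),\deg(j)\}$. Its Laplacian $L$ has $L_{ii}=\deg(i)$, $L_{ij}=-1$ if $\{i,j\}\in E$, $0$ otherwise. Processor $i$ has speed $s_i>0$, scaled so the smallest speed is $1$; $s_{\max}=\max_i s_i$, $\mathcal{S}=\sum_i s_i$. There are $m$ unit tasks; in state $x$, $w_i(x)$ is the number of tasks on $i$ and $\ell_i(x)=w_i(x)/s_i$. $\Psi_0(x)=\sum_i (w_i(x)-m s_i/\mathcal{S})^2/s_i$. Protocol with $\alpha=4s_{\max}$: in each round every task, independently, with $i$ its current processor, chooses a uniformly random neighbor $j$; if $\ell_i-\ell_j>1/s_j$ it moves to $j$ with probability $\frac{\deg(i)}{d_{ij}}\cdot\frac{\ell_i-\ell_j}{\alpha(1/s_i+1/s_j)w_i}$, otherwise stays. $X^t$ denotes the state after $t$ rounds. *)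

theory Defs
  imports "HOL-Probability.Probability" "Jordan_Normal_Form.Char_Poly"
begin

definition nbrs :: "(nat \<Rightarrow> nat \<Rightarrow> bool) \<Rightarrow> nat \<Rightarrow> nat \<Rightarrow> nat set" where
  "nbrs E n i = {j. j < n \<and> E i j}"

definition deg :: "(nat \<Rightarrow> nat \<Rightarrow> bool) \<Rightarrow> nat \<Rightarrow> nat \<Rightarrow> nat" where
  "deg E n i = card (nbrs E n i)"

definition max_deg :: "(nat \<Rightarrow> nat \<Rightarrow> bool) \<Rightarrow> nat \<Rightarrow> nat" where
  "max_deg E n = Max (deg E n ` {..<n})"

definition simple_graph :: "(nat \<Rightarrow> nat \<Rightarrow> bool) \<Rightarrow> nat \<Rightarrow> bool" where
  "simple_graph E n \<longleftrightarrow> (\<forall>i j. E i j \<longrightarrow> i < n \<and> j < n \<and> i \<noteq> j \<and> E j i)"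

definition graph_connected :: "(nat \<Rightarrow> nat \<Rightarrow> bool) \<Rightarrow> nat \<Rightarrow> bool" where
  "graph_connected E n \<longleftrightarrow> (\<forall>i<n. \<forall>j<n. (\<lambda>a b. a < n \<and> b < n \<and> E a b)\<^sup>*\<^sup>* i j)"

definition laplacian :: "(nat \<Rightarrow> nat \<Rightarrow> bool) \<Rightarrow> nat \<Rightarrow> real mat" where
  "laplacian E n = mat n n (\<lambda>(i,j). if i = j then real (deg E n i) else if E i j then -1 else 0)"

text \<open>Smallest eigenvalue, and second smallest eigenvalue counted with (algebraic) multiplicity.\<close>
definition lambda1 :: "real mat \<Rightarrow> real" where
  "lambda1 A = Min {k. eigenvalue A k}"

definition lambda2 :: "real mat \<Rightarrow> real" where
  "lambda2 A = Min {k. eigenvalue A k \<and> (k \<noteq> lambda1 A \<or> order (lambda1 A) (char_poly A) \<ge> 2)}"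

text \<open>States: x k is the processor of task k (tasks 0..<m).\<close>
definition load :: "nat \<Rightarrow> (nat \<Rightarrow> nat) \<Rightarrow> nat \<Rightarrow> nat" where
  "load m x i = card {k. k < m \<and> x k = i}"

definition smax :: "nat \<Rightarrow> (nat \<Rightarrow> real) \<Rightarrow> real" where
  "smax n s = Max (s ` {..<n})"

definition Stot :: "nat \<Rightarrow> (nat \<Rightarrow> real) \<Rightarrow> real" where
  "Stot n s = (\<Sum>i<n. s i)"

definition Psi0 :: "nat \<Rightarrow> (nat \<Rightarrow> real) \<Rightarrow> nat \<Rightarrow> (nat \<Rightarrow> nat) \<Rightarrow> real" where
  "Psi0 n s m x = (\<Sum>i<n. (real (load m x i) - real m * s i / Stot n s)\<^sup>2 / s i)"

definition move_prob :: "(nat \<Rightarrow> nat \<Rightarrow> bool) \<Rightarrow> nat \<Rightarrow> (nat \<Rightarrow> real) \<Rightarrow> nat \<Rightarrow> (nat \<Rightarrow> nat) \<Rightarrow> nat \<Rightarrow> nat \<Rightarrow> real" where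
  "move_prob E n s m x i j =
     (let li = real (load m x i) / s i; lj = real (load m x j) / s j;
          dij = max (deg E n i) (deg E n j); alpha = 4 * smax n s in
      if li - lj > 1 / s j
      then real (deg E n i) / real dij * (li - lj) / (alpha * (1 / s i + 1 / s j) * real (load m x i))
      else 0)"

definition task_step :: "(nat \<Rightarrow> nat \<Rightarrow> bool) \<Rightarrow> nat \<Rightarrow> (nat \<Rightarrow> real) \<Rightarrow> nat \<Rightarrow> (nat \<Rightarrow> nat) \<Rightarrow> nat \<Rightarrow> nat pmf" where
  "task_step E n s m x i =
     do { j \<leftarrow> pmf_of_set (nbrs E n i);
          b \<leftarrow> bernoulli_pmf (move_prob E n s m x i j);
          return_pmf (if b then j else i) }"

text \<open>One round: all tasks act independently (tasks outside 0..<m are fixed to processor 0).\<close>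
definition round_step :: "(nat \<Rightarrow> nat \<Rightarrow> bool) \<Rightarrow> nat \<Rightarrow> (nat \<Rightarrow> real) \<Rightarrow> nat \<Rightarrow> (nat \<Rightarrow> nat) \<Rightarrow> (nat \<Rightarrow> nat) pmf" where
  "round_step E n s m x = Pi_pmf {..<m} 0 (\<lambda>k. task_step E n s m x (x k))"

primrec state_dist :: "(nat \<Rightarrow> nat \<Rightarrow> bool) \<Rightarrow> nat \<Rightarrow> (nat \<Rightarrow> real) \<Rightarrow> nat \<Rightarrow> (nat \<Rightarrow> nat) pmf \<Rightarrow> nat \<Rightarrow> (nat \<Rightarrow> nat) pmf" where
  "state_dist E n s m mu0 0 = mu0"
| "state_dist E n s m mu0 (Suc t) = bind_pmf (state_dist E n s m mu0 t) (round_step E n s m)"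

end

theory Submission
  imports Defs
begin


locale gctx =
  fixes E :: "nat \<Rightarrow> nat \<Rightarrow> bool" and n :: nat
  assumes n2: "n \<ge> 2" and sg: "simple_graph E n" and conn: "graph_connected E n"
begin

abbreviation N where "N i \<equiv> nbrs E n i"

definition PS :: "(nat \<Rightarrow> nat \<Rightarrow> real) \<Rightarrow> real" where
  "PS f = (\<Sum>i<n. \<Sum>j\<in>N i. f i j)"

definition Pairs where "Pairs = {(i,j). i < n \<and> j < n \<and> E i j}"

lemma finN[simp]: "finite (N i)"
  unfolding nbrs_def by auto

lemma N_sub: "j \<in> N i \<Longrightarrow> j < n" unfolding nbrs_def by auto

lemma N_sym: "j \<in> N i \<Longrightarrow> i < n \<Longrightarrow> i \<in> N j"
  using sg unfolding nbrs_def simple_graph_def by auto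

lemma N_irr: "j \<in> N i \<Longrightarrow> j \<noteq> i"
  using sg unfolding nbrs_def simple_graph_def by auto

lemma Sigma_Pairs: "Sigma {..<n} N = Pairs"
  unfolding Pairs_def nbrs_def by auto

lemma PS_Pairs: "PS f = (\<Sum>(i,j)\<in>Pairs. f i j)"
  unfolding PS_def Sigma_Pairs[symmetric]
  by (subst sum.Sigma) auto

lemma finPairs: "finite Pairs"
  by (rule finite_subset[of _ "{..<n} \<times> {..<n}"]) (auto simp: Pairs_def)

lemma PS_swap: "PS f = PS (\<lambda>i j. f j i)"
  unfolding PS_Pairs
  by (rule sum.reindex_bij_witness[where i="\<lambda>(i,j). (j,i)" and j="\<lambda>(i,j). (j,i)"])
     (use sg in \<open>auto simp: Pairs_def simple_graph_def\<close>)

lemma PS_add: "PS (\<lambda>i j. f i j + g i j) = PS f + PS g"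
  unfolding PS_def by (simp add: sum.distrib)

lemma PS_diff: "PS (\<lambda>i j. f i j - g i j) = PS f - PS g"
  unfolding PS_def by (simp add: sum_subtractf)

lemma PS_cmult: "PS (\<lambda>i j. c * f i j) = c * PS f"
  unfolding PS_def by (simp add: sum_distrib_left)

lemma PS_mono: "(\<And>i j. i < n \<Longrightarrow> j \<in> N i \<Longrightarrow> f i j \<le> g i j) \<Longrightarrow> PS f \<le> PS g"
  unfolding PS_def by (intro sum_mono) auto

lemma PS_nonneg: "(\<And>i j. i < n \<Longrightarrow> j \<in> N i \<Longrightarrow> 0 \<le> f i j) \<Longrightarrow> 0 \<le> PS f"
  unfolding PS_def by (intro sum_nonneg) auto

lemma PS_cong: "(\<And>i j. i < n \<Longrightarrow> j \<in> N i \<Longrightarrow> f i j = g i j) \<Longrightarrow> PS f = PS g"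
  unfolding PS_def by (intro sum.cong) auto

definition Lz :: "(nat \<Rightarrow> real) \<Rightarrow> nat \<Rightarrow> real" where
  "Lz y i = real (deg E n i) * y i - (\<Sum>j\<in>N i. y j)"

lemma bilin: "PS (\<lambda>i j. (y i - y j) * (v i - v j)) / 2 = (\<Sum>i<n. v i * Lz y i)"
proof -
  have e: "(y i - y j) * (v i - v j) = y i * v i - y j * v i - (y i * v j - y j * v j)" for i j
    by (simp add: algebra_simps)
  have s1: "PS (\<lambda>i j. y j * v j) = PS (\<lambda>i j. y i * v i)" by (rule PS_swap)
  have s2: "PS (\<lambda>i j. y i * v j) = PS (\<lambda>i j. y j * v i)" by (rule PS_swap)
  have "PS (\<lambda>i j. (y i - y j) * (v i - v j)) = 2 * (PS (\<lambda>i j. y i * v i) - PS (\<lambda>i j. y j * v i))"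
    unfolding e PS_diff s1 s2 by simp
  also have "PS (\<lambda>i j. y i * v i) - PS (\<lambda>i j. y j * v i) = (\<Sum>i<n. v i * Lz y i)"
    unfolding PS_def Lz_def deg_def
    by (simp add: sum_subtractf[symmetric] sum_distrib_left right_diff_distrib ac_simps)
  finally show ?thesis by simp
qed

definition Q where "Q y = PS (\<lambda>i j. (y i - y j)^2) / 2"

lemma Q_eq: "Q y = (\<Sum>i<n. y i * Lz y i)"
  using bilin[of y y] unfolding Q_def by (simp add: power2_eq_square)

lemma Q_nonneg: "Q y \<ge> 0"
  unfolding Q_def PS_def by (intro divide_nonneg_pos sum_nonneg) auto

lemma sum_Lz: "(\<Sum>i<n. Lz y i) = 0"
  using bilin[of y "\<lambda>_. 1"] by (simp add: PS_def)

lemma Q_zero_const: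
  assumes "Q y = 0" "i < n" "j < n"
  shows "y i = y j"
proof -
  have "PS (\<lambda>i j. (y i - y j)^2) = 0" using assms(1) unfolding Q_def by simp
  hence z: "\<forall>i<n. \<forall>j\<in>N i. (y i - y j)^2 = 0"
    unfolding PS_def
    by (subst (asm) sum_nonneg_eq_0_iff) (auto intro!: sum_nonneg simp: sum_nonneg_eq_0_iff)
  have edge: "a < n \<Longrightarrow> b < n \<Longrightarrow> E a b \<Longrightarrow> y a = y b" for a b
    using z by (auto simp: nbrs_def)
  have "(\<lambda>a b. a < n \<and> b < n \<and> E a b)\<^sup>*\<^sup>* i j" using conn assms unfolding graph_connected_def by auto
  thus ?thesis
    by (induction rule: rtranclp_induct) (auto dest: edge)
qed

lemma deg_pos: "i < n \<Longrightarrow> deg E n i \<ge> 1"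
proof -
  assume i: "i < n"
  obtain j where j: "j < n" "j \<noteq> i" using n2 i
    by (metis One_nat_def less_2_cases_iff less_le_trans nat_neq_iff numeral_2_eq_2 zero_less_Suc)
  have "(\<lambda>a b. a < n \<and> b < n \<and> E a b)\<^sup>*\<^sup>* i j" using conn i j unfolding graph_connected_def by auto
  then obtain k where "E i k" "k < n" using j(2)
    by (cases rule: converse_rtranclpE) auto
  hence "k \<in> N i" by (simp add: nbrs_def)
  hence "N i \<noteq> {}" by auto
  thus ?thesis unfolding deg_def by (simp add: Suc_leI card_gt_0_iff)
qed


lemma Q_cong: "(\<And>i. i < n \<Longrightarrow> y i = z i) \<Longrightarrow> Q y = Q z"
  unfolding Q_def by (intro arg_cong[where f="\<lambda>x. x / 2"] PS_cong) (auto dest: N_sub)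

lemma Q_scale: "Q (\<lambda>i. c * y i) = c^2 * Q y"
proof -
  have "PS (\<lambda>i j. (c * y i - c * y j)^2) = PS (\<lambda>i j. c^2 * (y i - y j)^2)"
    by (intro PS_cong) (simp add: power2_eq_square algebra_simps)
  thus ?thesis unfolding Q_def PS_cmult by simp
qed

lemma Q_expand: "Q (\<lambda>i. y i + t * v i) = Q y + 2 * t * (\<Sum>i<n. v i * Lz y i) + t^2 * Q v"
proof -
  have "PS (\<lambda>i j. (y i + t * v i - (y j + t * v j))^2) =
        PS (\<lambda>i j. (y i - y j)^2 + (2 * t) * ((y i - y j) * (v i - v j)) + t^2 * (v i - v j)^2)"
    by (intro PS_cong) (simp add: power2_eq_square algebra_simps)
  also have "\<dots> = PS (\<lambda>i j. (y i - y j)^2) + (2*t) * PS (\<lambda>i j. (y i - y j) * (v i - v j))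
       + t^2 * PS (\<lambda>i j. (v i - v j)^2)"
    by (simp add: PS_add PS_cmult)
  finally show ?thesis using bilin[of y v] unfolding Q_def by (simp add: field_simps)
qed

lemma cont_coord[continuous_intros]: "continuous_on A (\<lambda>z::nat\<Rightarrow>real. z i)"
  by (rule continuous_on_subset[OF continuous_on_product_coordinates]) auto

definition K :: "(nat \<Rightarrow> real) set" where
  "K = {z. (\<forall>i. z i \<in> (if i < n then {-1..1} else {0})) \<and> (\<Sum>i<n. z i) = 0 \<and> (\<Sum>i<n. (z i)^2) = 1}"

lemma compact_K: "compact K"
proof -
  have "compactin (product_topology (\<lambda>i. euclideanreal) UNIV) (PiE UNIV (\<lambda>i. if i < n then {-1..1} else {0::real}))"
    by (subst compactin_PiE) auto
  hence c: "compact (Pi UNIV (\<lambda>i. if i < n then {-1..1} else {0::real}))"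
    by (simp add: euclidean_product_topology compactin_euclidean_iff PiE_UNIV_domain)
  have cl: "closed ({z::nat\<Rightarrow>real. (\<Sum>i<n. z i) = 0} \<inter> {z. (\<Sum>i<n. (z i)^2) = 1})"
    by (intro closed_Int closed_Collect_eq continuous_intros)
  have "K = Pi UNIV (\<lambda>i. if i < n then {-1..1} else {0::real}) \<inter> ({z::nat\<Rightarrow>real. (\<Sum>i<n. z i) = 0} \<inter> {z. (\<Sum>i<n. (z i)^2) = 1})"
    unfolding K_def Pi_def by blast
  thus ?thesis using c cl by (simp add: compact_Int_closed)
qed

lemma sum01: "(\<And>i. i \<noteq> 0 \<Longrightarrow> i \<noteq> 1 \<Longrightarrow> f i = 0) \<Longrightarrow> (\<Sum>i<n. f i) = f 0 + (f 1 :: real)"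
proof -
  assume h: "\<And>i. i \<noteq> 0 \<Longrightarrow> i \<noteq> 1 \<Longrightarrow> f i = 0"
  have "(\<Sum>i<n. f i) = (\<Sum>i\<in>{0,1}. f i)"
    using n2 h by (intro sum.mono_neutral_right) auto
  thus ?thesis by simp
qed

lemma K_ne: "K \<noteq> {}"
proof -
  define a :: real where "a = 1 / sqrt 2"
  define z where "z = (\<lambda>i::nat. if i = 0 then a else if i = 1 then -a else 0)"
  have a2: "a^2 = 1/2" unfolding a_def by (simp add: power_divide)
  have a1: "\<bar>a\<bar> \<le> 1" unfolding a_def by (simp add: real_sqrt_ge_one)
  have "(\<Sum>i<n. z i) = 0" by (subst sum01) (auto simp: z_def)
  moreover have "(\<Sum>i<n. (z i)^2) = 1" by (subst sum01) (auto simp: z_def a2)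
  moreover have "\<forall>i. z i \<in> (if i < n then {-1..1} else {0})"
    using a1 n2 by (auto simp: z_def)
  ultimately have "z \<in> K" unfolding K_def by auto
  thus ?thesis by auto
qed

lemma cont_Q: "continuous_on A Q"
  unfolding Q_def[abs_def] PS_def by (intro continuous_intros) auto

lemma Q_min: "\<exists>y\<in>K. \<forall>z\<in>K. Q y \<le> Q z"
  by (rule continuous_attains_inf[OF compact_K K_ne cont_Q])

lemma quad_zero: fixes a b :: real assumes "\<And>t. a * t + b * t^2 \<ge> 0" shows "a = 0"
proof (rule ccontr)
  assume a: "a \<noteq> 0"
  define t where "t = - a / (2 * (\<bar>b\<bar> + 1))"
  have p: "\<bar>b\<bar> + 1 > 0" by simp
  have "a * t + b * t^2 = a^2 * (- 1 / (2 * (\<bar>b\<bar> + 1)) + b / (4 * (\<bar>b\<bar> + 1)^2))"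
    unfolding t_def by (simp add: power2_eq_square field_simps)
  also have "- 1 / (2 * (\<bar>b\<bar> + 1)) + b / (4 * (\<bar>b\<bar> + 1)^2) < 0"
  proof -
    have "b / (4 * (\<bar>b\<bar> + 1)^2) \<le> \<bar>b\<bar> / (4 * (\<bar>b\<bar> + 1)^2)"
      by (intro divide_right_mono) auto
    also have "\<dots> = (\<bar>b\<bar>/(\<bar>b\<bar>+1)) / (4*(\<bar>b\<bar>+1))"
      by (simp add: power2_eq_square)
    also have "\<dots> \<le> 1/(4*(\<bar>b\<bar>+1))"
      using p by (intro divide_right_mono) auto
    also have "\<dots> < 1/(2*(\<bar>b\<bar>+1))"
      using p by (simp add: field_simps)
    finally show ?thesis by simp
  qed
  hence "a^2 * (- 1 / (2 * (\<bar>b\<bar> + 1)) + b / (4 * (\<bar>b\<bar> + 1)^2)) < 0"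
    using a by (simp add: mult_pos_neg)
  finally show False using assms[of t] by simp
qed


abbreviation "LL \<equiv> laplacian E n"

lemma lap_carrier: "LL \<in> carrier_mat n n" by (simp add: laplacian_def)

lemma lap_mult: assumes "i < n" shows "(LL *\<^sub>v vec n y) $ i = Lz y i"
proof -
  have "(LL *\<^sub>v vec n y) $ i = (\<Sum>j\<in>{0..<n}. (if i = j then real (deg E n i) else if E i j then -1 else 0) * y j)"
    using assms by (simp add: laplacian_def mult_mat_vec_def scalar_prod_def)
  also have "\<dots> = (\<Sum>j<n. (if j = i then real (deg E n i) * y j else 0) + (if E i j then - y j else 0))"
    using sg unfolding simple_graph_def by (intro sum.cong) auto
  also have "\<dots> = real (deg E n i) * y i - (\<Sum>j\<in>N i. y j)"
    using assms by (simp add: sum.distrib sum.inter_filter[symmetric] nbrs_def sum_negf)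
  finally show ?thesis unfolding Lz_def .
qed

lemma ev_vec: assumes "eigenvector LL v k" shows "\<forall>i<n. Lz (\<lambda>i. v $ i) i = k * v $ i"
    and "\<exists>i<n. v $ i \<noteq> 0" and "v = vec n (\<lambda>i. v $ i)"
proof -
  have v: "v \<in> carrier_vec n" "v \<noteq> 0\<^sub>v n" "LL *\<^sub>v v = k \<cdot>\<^sub>v v"
    using assms lap_carrier unfolding eigenvector_def by auto
  show vv: "v = vec n (\<lambda>i. v $ i)" using v(1) by (intro eq_vecI) auto
  show "\<forall>i<n. Lz (\<lambda>i. v $ i) i = k * v $ i"
  proof (intro allI impI)
    fix i assume i: "i < n"
    have "(LL *\<^sub>v v) $ i = k * v $ i" using v(1,3) i by simp
    thus "Lz (\<lambda>i. v $ i) i = k * v $ i" using lap_mult[OF i, of "\<lambda>i. v $ i"] vv by simp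
  qed
  show "\<exists>i<n. v $ i \<noteq> 0"
  proof (rule ccontr)
    assume "\<not> ?thesis"
    hence "v = 0\<^sub>v n" using v(1) by (intro eq_vecI) auto
    thus False using v(2) by simp
  qed
qed

lemma ev_nonneg: assumes "eigenvalue LL k" shows "k \<ge> 0"
proof -
  obtain v where ev: "eigenvector LL v k" using assms unfolding eigenvalue_def by auto
  define y where "y = (\<lambda>i. v $ i)"
  have L: "\<forall>i<n. Lz y i = k * y i" and nz: "\<exists>i<n. y i \<noteq> 0"
    using ev_vec[OF ev] unfolding y_def by auto
  have "Q y = (\<Sum>i<n. k * (y i)^2)" unfolding Q_eq using L
    by (intro sum.cong) (auto simp: power2_eq_square)
  hence Qy: "Q y = k * (\<Sum>i<n. (y i)^2)" by (simp add: sum_distrib_left)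
  obtain i where i: "i < n" "y i \<noteq> 0" using nz by auto
  have "(y i)^2 \<le> (\<Sum>i<n. (y i)^2)"
    using i by (intro member_le_sum) auto
  moreover have "(y i)^2 > 0" using i by simp
  ultimately have "(\<Sum>i<n. (y i)^2) > 0" by linarith
  thus ?thesis using Qy Q_nonneg[of y] by (simp add: zero_le_mult_iff)
qed

lemma zero_ev: "eigenvalue LL 0"
proof -
  have "eigenvector LL (vec n (\<lambda>_. 1)) 0"
    unfolding eigenvector_def
  proof (intro conjI)
    show "vec n (\<lambda>_. 1) \<in> carrier_vec (dim_row LL)" using lap_carrier by simp
    show "vec n (\<lambda>_. 1::real) \<noteq> 0\<^sub>v (dim_row LL)"
    proof
      assume "vec n (\<lambda>_. 1::real) = 0\<^sub>v (dim_row LL)"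
      hence "vec n (\<lambda>_. 1::real) $ 0 = 0\<^sub>v (dim_row LL) $ 0" by simp
      thus False using n2 lap_carrier by simp
    qed
    show "LL *\<^sub>v vec n (\<lambda>_. 1) = 0 \<cdot>\<^sub>v vec n (\<lambda>_. 1)"
    proof (rule eq_vecI)
      fix i assume "i < dim_vec (0 \<cdot>\<^sub>v vec n (\<lambda>_. 1::real))"
      hence i: "i < n" by simp
      have "(LL *\<^sub>v vec n (\<lambda>_. 1)) $ i = Lz (\<lambda>_. 1) i" by (rule lap_mult[OF i])
      also have "\<dots> = 0" by (simp add: Lz_def deg_def)
      finally show "(LL *\<^sub>v vec n (\<lambda>_. 1)) $ i = (0 \<cdot>\<^sub>v vec n (\<lambda>_. 1::real)) $ i" using i by simp
    qed (use lap_carrier in simp)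
  qed
  thus ?thesis unfolding eigenvalue_def by auto
qed

lemma fin_ev: "finite {k. eigenvalue LL k}"
proof -
  have c: "coeff (char_poly LL) n = 1" using degree_monic_char_poly[OF lap_carrier] by simp
  hence "char_poly LL \<noteq> 0" by auto
  hence "finite {k. poly (char_poly LL) k = 0}" by (rule poly_roots_finite)
  thus ?thesis using eigenvalue_root_char_poly[OF lap_carrier] by simp
qed

lemma lambda1_0: "lambda1 LL = 0"
  unfolding lambda1_def using fin_ev zero_ev ev_nonneg by (intro Min_eqI) auto

lemma sumsq_expand: fixes y v :: "nat \<Rightarrow> real" shows "(\<Sum>i<n. (y i + t * v i)^2) = (\<Sum>i<n. (y i)^2) + 2 * t * (\<Sum>i<n. y i * v i) + t^2 * (\<Sum>i<n. (v i)^2)"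
proof -
  have "(\<Sum>i<n. (y i + t * v i)^2) = (\<Sum>i<n. (y i)^2 + 2 * t * (y i * v i) + t^2 * (v i)^2)"
    by (intro sum.cong) (simp_all add: power2_eq_square algebra_simps)
  thus ?thesis by (simp add: sum.distrib sum_distrib_left)
qed

lemma aux_quad: fixes \<mu> t a b c q :: real
  shows "\<mu> * (1 + 2 * t * a + t^2 * b) \<le> \<mu> + 2 * t * c + t^2 * q \<Longrightarrow> 0 \<le> (2 * c - 2 * \<mu> * a) * t + (q - \<mu> * b) * t^2"
  by (simp add: algebra_simps)

lemma spectral:
  shows "lambda2 LL \<ge> 0"
    and "(\<Sum>i<n. z i) = 0 \<Longrightarrow> lambda2 LL * (\<Sum>i<n. (z i)^2) \<le> Q z"
proof -
  obtain y where yK: "y \<in> K" and ymin: "\<forall>z\<in>K. Q y \<le> Q z" using Q_min by auto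
  define \<mu> where "\<mu> = Q y"
  have y0: "\<forall>i\<ge>n. y i = 0" and ys: "(\<Sum>i<n. y i) = 0" and yq: "(\<Sum>i<n. (y i)^2) = 1"
  proof -
    have "\<forall>i. y i \<in> (if i < n then {-1..1} else {0})" using yK unfolding K_def by auto
    hence "\<forall>i\<ge>n. y i = 0" by (metis not_less singletonD)
    thus "\<forall>i\<ge>n. y i = 0" "(\<Sum>i<n. y i) = 0" "(\<Sum>i<n. (y i)^2) = 1" using yK unfolding K_def by auto
  qed
  have ray: "Q z \<ge> \<mu> * (\<Sum>i<n. (z i)^2)" if zs: "(\<Sum>i<n. z i) = 0" for z
  proof (cases "(\<Sum>i<n. (z i)^2) = 0")
    case True thus ?thesis using Q_nonneg[of z] by simp
  next
    case False
    define r where "r = sqrt (\<Sum>i<n. (z i)^2)"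
    have sp: "(\<Sum>i<n. (z i)^2) > 0" using False by (simp add: sum_nonneg order_le_neq_trans)
    hence r: "r > 0" "r^2 = (\<Sum>i<n. (z i)^2)" unfolding r_def by auto
    define z' where "z' = (\<lambda>i. if i < n then z i / r else 0)"
    have "z' \<in> K"
      unfolding K_def
    proof (intro CollectI conjI allI)
      have s2: "(\<Sum>i<n. (z' i)^2) = (\<Sum>i<n. (z i)^2) / r^2"
        unfolding z'_def by (simp add: power_divide sum_divide_distrib)
      show "(\<Sum>i<n. (z' i)^2) = 1" using s2 r False by simp
      show "(\<Sum>i<n. z' i) = 0" unfolding z'_def using zs by (simp add: sum_divide_distrib[symmetric])
      fix i
      show "z' i \<in> (if i < n then {-1..1} else {0})"
      proof (cases "i < n")
        case True
        have "(z' i)^2 \<le> (\<Sum>i<n. (z' i)^2)" using True by (intro member_le_sum) auto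
        hence "(z' i)^2 \<le> 1" using s2 r False by simp
        hence "\<bar>z' i\<bar> \<le> 1" by (simp add: abs_square_le_1)
        thus ?thesis using True by auto
      qed (auto simp: z'_def)
    qed
    hence "\<mu> \<le> Q z'" using ymin unfolding \<mu>_def by auto
    also have "Q z' = Q (\<lambda>i. (1/r) * z i)" by (intro Q_cong) (auto simp: z'_def)
    also have "\<dots> = Q z / r^2" using Q_scale[of "1/r" z] by (simp add: power_divide)
    finally have "\<mu> \<le> Q z / r^2" .
    hence "\<mu> * r^2 \<le> Q z" using r sp by (simp add: pos_le_divide_eq)
    thus ?thesis using r by simp
  qed
  define v where "v = (\<lambda>i. if i < n then Lz y i - \<mu> * y i else 0)"
  have vs: "(\<Sum>i<n. v i) = 0" unfolding v_def
    using sum_Lz[of y] ys by (simp add: sum_subtractf sum_distrib_left[symmetric])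
  have "\<forall>t. (2 * (\<Sum>i<n. v i * Lz y i) - 2 * \<mu> * (\<Sum>i<n. y i * v i)) * t
             + (Q v - \<mu> * (\<Sum>i<n. (v i)^2)) * t^2 \<ge> 0"
  proof
    fix t :: real
    have s: "(\<Sum>i<n. y i + t * v i) = 0" using ys vs by (simp add: sum.distrib sum_distrib_left[symmetric])
    have "\<mu> * (\<Sum>i<n. (y i + t * v i)^2) \<le> Q (\<lambda>i. y i + t * v i)" by (rule ray[OF s])
    moreover have "(\<Sum>i<n. (y i + t * v i)^2) = 1 + 2 * t * (\<Sum>i<n. y i * v i) + t^2 * (\<Sum>i<n. (v i)^2)"
      using yq by (simp add: sumsq_expand)
    ultimately have "\<mu> * (1 + 2 * t * (\<Sum>i<n. y i * v i) + t^2 * (\<Sum>i<n. (v i)^2)) \<le> Q (\<lambda>i. y i + t * v i)"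
      by simp
    thus "(2 * (\<Sum>i<n. v i * Lz y i) - 2 * \<mu> * (\<Sum>i<n. y i * v i)) * t
             + (Q v - \<mu> * (\<Sum>i<n. (v i)^2)) * t^2 \<ge> 0"
      unfolding Q_expand \<mu>_def by (rule aux_quad)
  qed
  hence "2 * (\<Sum>i<n. v i * Lz y i) - 2 * \<mu> * (\<Sum>i<n. y i * v i) = 0"
    by (intro quad_zero[where b="Q v - \<mu> * (\<Sum>i<n. (v i)^2)"]) auto
  moreover have "(\<Sum>i<n. (v i)^2) = (\<Sum>i<n. v i * Lz y i) - \<mu> * (\<Sum>i<n. y i * v i)"
  proof -
    have "(\<Sum>i<n. (v i)^2) = (\<Sum>i<n. v i * Lz y i - \<mu> * (y i * v i))"
      by (intro sum.cong) (auto simp: v_def power2_eq_square algebra_simps)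
    thus ?thesis by (simp add: sum_subtractf sum_distrib_left)
  qed
  ultimately have "(\<Sum>i<n. (v i)^2) = 0" by simp
  hence "\<forall>i<n. (v i)^2 = 0" by (subst (asm) sum_nonneg_eq_0_iff) auto
  hence Ly: "\<forall>i<n. Lz y i = \<mu> * y i" unfolding v_def by auto
  have ynz: "\<exists>i<n. y i \<noteq> 0"
  proof (rule ccontr)
    assume "\<not> ?thesis"
    hence "(\<Sum>i<n. (y i)^2) = 0" by simp
    thus False using yq by simp
  qed
  have evmu: "eigenvalue LL \<mu>"
  proof -
    have "eigenvector LL (vec n y) \<mu>"
      unfolding eigenvector_def
    proof (intro conjI)
      show "vec n y \<in> carrier_vec (dim_row LL)" using lap_carrier by simp
      show "vec n y \<noteq> 0\<^sub>v (dim_row LL)"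
      proof
        assume h: "vec n y = 0\<^sub>v (dim_row LL)"
        obtain i where i: "i < n" "y i \<noteq> 0" using ynz by auto
        have "vec n y $ i = 0\<^sub>v (dim_row LL) $ i" using h by simp
        thus False using i lap_carrier by simp
      qed
      show "LL *\<^sub>v vec n y = \<mu> \<cdot>\<^sub>v vec n y"
      proof (rule eq_vecI)
        fix i assume "i < dim_vec (\<mu> \<cdot>\<^sub>v vec n y)"
        hence i: "i < n" by simp
        have "(LL *\<^sub>v vec n y) $ i = Lz y i" by (rule lap_mult[OF i])
        thus "(LL *\<^sub>v vec n y) $ i = (\<mu> \<cdot>\<^sub>v vec n y) $ i" using i Ly by simp
      qed (use lap_carrier in simp)
    qed
    thus ?thesis unfolding eigenvalue_def by auto
  qed
  have mupos: "\<mu> \<noteq> 0"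
  proof
    assume "\<mu> = 0"
    hence Q0: "Q y = 0" unfolding \<mu>_def .
    have c: "\<forall>i<n. y i = y 0"
    proof (intro allI impI)
      fix i assume "i < n" thus "y i = y 0" using Q_zero_const[OF Q0, of i 0] n2 by linarith
    qed
    have "(\<Sum>i<n. y i) = (\<Sum>i<n. y 0)" by (intro sum.cong refl) (use c in blast)
    hence "(\<Sum>i<n. y i) = real n * y 0" by simp
    hence "y 0 = 0" using ys n2 by simp
    hence "\<forall>i<n. y i = 0" using c by metis
    thus False using ynz by auto
  qed
  define S2 where "S2 = {k. eigenvalue LL k \<and> (k \<noteq> lambda1 LL \<or> order (lambda1 LL) (char_poly LL) \<ge> 2)}"
  have fS2: "finite S2" by (rule finite_subset[OF _ fin_ev]) (auto simp: S2_def)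
  have muS2: "\<mu> \<in> S2" using evmu mupos lambda1_0 by (simp add: S2_def)
  have l2: "lambda2 LL = Min S2" unfolding lambda2_def S2_def ..
  have l2mu: "lambda2 LL \<le> \<mu>" unfolding l2 using fS2 muS2 by (rule Min_le)
  have "lambda2 LL \<in> S2" unfolding l2 using fS2 muS2 by (intro Min_in) auto
  thus "lambda2 LL \<ge> 0" unfolding S2_def using ev_nonneg by auto
  assume zs: "(\<Sum>i<n. z i) = 0"
  have "lambda2 LL * (\<Sum>i<n. (z i)^2) \<le> \<mu> * (\<Sum>i<n. (z i)^2)"
    using l2mu by (intro mult_right_mono sum_nonneg) auto
  also have "\<dots> \<le> Q z" by (rule ray[OF zs])
  finally show "lambda2 LL * (\<Sum>i<n. (z i)^2) \<le> Q z" .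
qed

end


lemma int_bounded: fixes f :: "'a \<Rightarrow> real"
  assumes "\<And>x. \<bar>f x\<bar> \<le> B" shows "integrable (measure_pmf p) f"
  by (rule measure_pmf.integrable_const_bound[where B=B]) (use assms in auto)

lemma expectation_bind_bounded: fixes f :: "'b \<Rightarrow> real"
  assumes "\<And>x. \<bar>f x\<bar> \<le> B"
  shows "measure_pmf.expectation (bind_pmf M N) f = measure_pmf.expectation M (\<lambda>x. measure_pmf.expectation (N x) f)"
  using measurable_measure_pmf[of N] assms unfolding measure_pmf_bind
  by (intro integral_bind[where K="count_space UNIV" and B=B and B'=1]) (auto intro: measure_pmf.finite_measure)

lemma exp_component:
  fixes P :: "'a \<Rightarrow> 'b pmf" and g :: "'b \<Rightarrow> real"
  assumes "finite A" "k \<in> A"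
  shows "measure_pmf.expectation (Pi_pmf A d P) (\<lambda>y. g (y k)) = measure_pmf.expectation (P k) g"
proof -
  have "measure_pmf.expectation (Pi_pmf A d P) (\<lambda>y. g (y k)) = measure_pmf.expectation (map_pmf (\<lambda>y. y k) (Pi_pmf A d P)) g"
    by simp
  also have "map_pmf (\<lambda>y. y k) (Pi_pmf A d P) = P k" using assms by (simp add: Pi_pmf_component)
  finally show ?thesis .
qed

lemma exp_pair:
  fixes P :: "'a \<Rightarrow> 'b pmf" and g h :: "'b \<Rightarrow> real"
  assumes "finite A" "k \<in> A" "l \<in> A" "k \<noteq> l"
    and "\<And>v. 0 \<le> g v" "\<And>v. g v \<le> 1" "\<And>v. 0 \<le> h v" "\<And>v. h v \<le> 1"
  shows "measure_pmf.expectation (Pi_pmf A d P) (\<lambda>y. g (y k) * h (y l)) =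
         measure_pmf.expectation (P k) g * measure_pmf.expectation (P l) h"
proof -
  define f where "f = (\<lambda>j v. if j = k then g v else if j = l then h v else 1)"
  have pr: "(\<Prod>j\<in>A. f j (y j)) = g (y k) * h (y l)" for y
  proof -
    have "(\<Prod>j\<in>A. f j (y j)) = (\<Prod>j\<in>{k,l}. f j (y j))"
      using assms by (intro prod.mono_neutral_right) (auto simp: f_def)
    thus ?thesis using assms(4) by (simp add: f_def)
  qed
  have "measure_pmf.expectation (Pi_pmf A d P) (\<lambda>y. \<Prod>j\<in>A. f j (y j)) = (\<Prod>j\<in>A. measure_pmf.expectation (P j) (f j))"
  proof (rule expectation_prod_Pi_pmf[OF assms(1)])
    fix j assume "j \<in> A"
    show "integrable (measure_pmf (P j)) (f j)"
      by (rule int_bounded[where B=1]) (use assms in \<open>auto simp: f_def\<close>)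
  next
    fix j v show "0 \<le> f j v" using assms by (auto simp: f_def)
  qed
  also have "\<dots> = (\<Prod>j\<in>{k,l}. measure_pmf.expectation (P j) (f j))"
    using assms by (intro prod.mono_neutral_right) (auto simp: f_def)
  also have "\<dots> = measure_pmf.expectation (P k) g * measure_pmf.expectation (P l) h"
    using assms(4) by (simp add: f_def)
  finally show ?thesis unfolding pr .
qed

definition ind :: "'b \<Rightarrow> 'b \<Rightarrow> real" where "ind i v = (if v = i then 1 else 0)"

lemma ind_sq: "ind i v * ind i v = ind i v" by (simp add: ind_def)

lemma exp_sq_count:
  fixes P :: "'a \<Rightarrow> 'b pmf" and c :: real and i :: 'b
  assumes A: "finite A"
  defines "\<pi> \<equiv> (\<lambda>k. measure_pmf.expectation (P k) (ind i))"
  shows "measure_pmf.expectation (Pi_pmf A d P) (\<lambda>y. ((\<Sum>k\<in>A. ind i (y k)) - c)^2)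
     = ((\<Sum>k\<in>A. \<pi> k) - c)^2 + (\<Sum>k\<in>A. \<pi> k * (1 - \<pi> k))"
proof -
  let ?M = "measure_pmf (Pi_pmf A d P)"
  have b: "\<bar>ind i v\<bar> \<le> 1" for v by (simp add: ind_def)
  have intX: "integrable ?M (\<lambda>y. ind i (y k))" for k by (rule int_bounded[where B=1]) (simp add: ind_def)
  have intXX: "integrable ?M (\<lambda>y. ind i (y k) * ind i (y l))" for k l by (rule int_bounded[where B=1]) (simp add: ind_def)
  have pw: "((\<Sum>k\<in>A. ind i (y k)) - c)^2 = (\<Sum>k\<in>A. \<Sum>l\<in>A. ind i (y k) * ind i (y l)) - 2 * c * (\<Sum>k\<in>A. ind i (y k)) + c^2" for y
    by (simp add: power2_eq_square sum_product algebra_simps)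
  have EX: "measure_pmf.expectation (Pi_pmf A d P) (\<lambda>y. ind i (y k)) = \<pi> k" if "k \<in> A" for k
    using exp_component[OF A that, of d P "ind i"] unfolding \<pi>_def .
  have EXX: "measure_pmf.expectation (Pi_pmf A d P) (\<lambda>y. ind i (y k) * ind i (y l)) = (if k = l then \<pi> k else \<pi> k * \<pi> l)"
    if "k \<in> A" "l \<in> A" for k l
  proof (cases "k = l")
    case True thus ?thesis using EX[OF that(1)] by (simp add: ind_sq)
  next
    case False thus ?thesis unfolding \<pi>_def by (subst exp_pair) (use A that in \<open>auto simp: ind_def\<close>)
  qed
  have "measure_pmf.expectation (Pi_pmf A d P) (\<lambda>y. ((\<Sum>k\<in>A. ind i (y k)) - c)^2)
     = measure_pmf.expectation (Pi_pmf A d P) (\<lambda>y. (\<Sum>k\<in>A. \<Sum>l\<in>A. ind i (y k) * ind i (y l)) - 2 * c * (\<Sum>k\<in>A. ind i (y k)) + c^2)"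
    unfolding pw ..
  also have "\<dots> = (\<Sum>k\<in>A. \<Sum>l\<in>A. measure_pmf.expectation (Pi_pmf A d P) (\<lambda>y. ind i (y k) * ind i (y l)))
       - 2 * c * (\<Sum>k\<in>A. measure_pmf.expectation (Pi_pmf A d P) (\<lambda>y. ind i (y k))) + c^2"
    using intX intXX
    by (simp add: Bochner_Integration.integral_sum integrable_sum Bochner_Integration.integral_diff Bochner_Integration.integral_add)
  also have "\<dots> = (\<Sum>k\<in>A. \<Sum>l\<in>A. (if k = l then \<pi> k else \<pi> k * \<pi> l)) - 2 * c * (\<Sum>k\<in>A. \<pi> k) + c^2"
    using EX EXX by simp
  also have "(\<Sum>k\<in>A. \<Sum>l\<in>A. (if k = l then \<pi> k else \<pi> k * \<pi> l)) = (\<Sum>k\<in>A. \<Sum>l\<in>A. \<pi> k * \<pi> l) + (\<Sum>k\<in>A. \<pi> k * (1 - \<pi> k))"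
  proof -
    have "(\<Sum>k\<in>A. \<Sum>l\<in>A. (if k = l then \<pi> k else \<pi> k * \<pi> l)) = (\<Sum>k\<in>A. (\<Sum>l\<in>A. \<pi> k * \<pi> l) + \<pi> k * (1 - \<pi> k))"
    proof (rule sum.cong[OF refl])
      fix k assume k: "k \<in> A"
      have "(\<Sum>l\<in>A. (if k = l then \<pi> k else \<pi> k * \<pi> l)) = (\<Sum>l\<in>A. \<pi> k * \<pi> l + (if k = l then \<pi> k * (1 - \<pi> k) else 0))"
        by (rule sum.cong) (auto simp: algebra_simps)
      also have "\<dots> = (\<Sum>l\<in>A. \<pi> k * \<pi> l) + \<pi> k * (1 - \<pi> k)"
        using k A by (simp add: sum.distrib)
      finally show "(\<Sum>l\<in>A. (if k = l then \<pi> k else \<pi> k * \<pi> l)) = (\<Sum>l\<in>A. \<pi> k * \<pi> l) + \<pi> k * (1 - \<pi> k)" .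
    qed
    thus ?thesis by (simp add: sum.distrib)
  qed
  finally show ?thesis by (simp add: power2_eq_square sum_product algebra_simps)
qed



locale ctx = gctx E n for E n +
  fixes s :: "nat \<Rightarrow> real" and m :: nat
  assumes spos: "\<forall>i<n. s i > 0" and smin: "Min (s ` {..<n}) = 1"
begin

abbreviation "smx \<equiv> smax n s"
abbreviation "\<Delta> \<equiv> real (max_deg E n)"
abbreviation "\<alpha> \<equiv> 4 * smx"
abbreviation "dg i \<equiv> real (deg E n i)"
definition dd where "dd a b = real (max (deg E n a) (deg E n b))"

lemma s_ge1: "i < n \<Longrightarrow> 1 \<le> s i"
  using smin Min_le[of "s ` {..<n}" "s i"] by auto

lemma s_le: "i < n \<Longrightarrow> s i \<le> smx"
  unfolding smax_def by (rule Max_ge) auto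

lemma smx_ge1: "1 \<le> smx" using s_ge1[of 0] s_le[of 0] n2 by linarith

lemma dg_pos: "i < n \<Longrightarrow> 1 \<le> dg i" using deg_pos by simp

lemma deg_le: "i < n \<Longrightarrow> dg i \<le> \<Delta>"
  unfolding max_deg_def by (simp add: Max_ge)

lemma dd_ge: "dg a \<le> dd a b" "dg b \<le> dd a b" unfolding dd_def by auto

lemma dd_le: "a < n \<Longrightarrow> b < n \<Longrightarrow> dd a b \<le> \<Delta>"
  unfolding dd_def using deg_le[of a] deg_le[of b] by (auto simp: max_def)

definition w :: "(nat \<Rightarrow> nat) \<Rightarrow> nat \<Rightarrow> real" where "w x a = real (load m x a)"
definition l :: "(nat \<Rightarrow> nat) \<Rightarrow> nat \<Rightarrow> real" where "l x a = w x a / s a"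
abbreviation "mp x \<equiv> move_prob E n s m x"
definition F where "F x a b = w x a * mp x a b / dg a"

lemma w_nonneg: "0 \<le> w x a" unfolding w_def by simp

lemma l_nonneg: assumes "a < n" shows "0 \<le> l x a" unfolding l_def using w_nonneg[of x a] spos[rule_format, OF assms] by simp

lemma mp_eq: "mp x a b = (if l x a - l x b > 1 / s b then dg a / dd a b * (l x a - l x b) / (\<alpha> * (1 / s a + 1 / s b) * w x a) else 0)"
  unfolding move_prob_def Let_def l_def w_def dd_def by simp

lemma active_wpos: assumes "a < n" "b < n" "l x a - l x b > 1 / s b" shows "w x a > 0"
proof -
  have "l x a > 0" using assms l_nonneg[of b x] spos by (smt (verit) divide_pos_pos)
  thus ?thesis unfolding l_def using spos[rule_format, OF assms(1)] by (simp add: zero_less_divide_iff)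
qed

lemma mp_bounds: assumes "a < n" "b \<in> N a" shows "0 \<le> mp x a b" "mp x a b \<le> 1 / 4"
proof -
  have b: "b < n" using assms N_sub by auto
  have sa: "s a > 0" "s b > 0" using spos assms(1) b by auto
  have dpos: "dg a > 0" "dd a b > 0" using dg_pos[OF assms(1)] dd_ge[of a b] by auto
  have "0 \<le> mp x a b \<and> mp x a b \<le> 1/4"
  proof (cases "l x a - l x b > 1 / s b")
    case False thus ?thesis by (simp add: mp_eq)
  next
    case True
    have wp: "w x a > 0" using active_wpos[OF assms(1) b True] .
    define \<sigma> where "\<sigma> = 1 / s a + 1 / s b"
    have sg: "\<sigma> > 0" unfolding \<sigma>_def using sa by (intro add_pos_pos) auto
    have d: "0 \<le> l x a - l x b" using True sa by (smt (verit) divide_pos_pos)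
    have "l x a - l x b \<le> l x a" using l_nonneg[OF b] by simp
    also have "l x a \<le> \<sigma> * w x a" unfolding l_def \<sigma>_def using sa wp by (simp add: field_simps)
    finally have q1: "(l x a - l x b) / (\<sigma> * w x a) \<le> 1" using sg wp by simp
    have q0: "0 \<le> (l x a - l x b) / (\<sigma> * w x a)" using d sg wp by simp
    have r1: "dg a / dd a b \<le> 1" using dd_ge[of a b] dpos by simp
    have r0: "0 \<le> dg a / dd a b" using dpos by simp
    define P where "P = (dg a / dd a b) * ((l x a - l x b) / (\<sigma> * w x a))"
    have "mp x a b = P / \<alpha>"
      using True unfolding mp_eq \<sigma>_def P_def by (simp add: field_simps)
    moreover have "P \<le> 1" unfolding P_def by (rule mult_le_one[OF r1 q0 q1])
    moreover have "0 \<le> P" unfolding P_def by (rule mult_nonneg_nonneg[OF r0 q0])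
    moreover have "\<alpha> \<ge> 4" using smx_ge1 by simp
    moreover have gen: "\<And>P a::real. 0 \<le> P \<Longrightarrow> P \<le> 1 \<Longrightarrow> a \<ge> 4 \<Longrightarrow> 0 \<le> P / a \<and> P / a \<le> 1 / 4"
      by (auto simp: divide_simps)
    ultimately show ?thesis by (simp only:)
  qed
  thus "0 \<le> mp x a b" "mp x a b \<le> 1 / 4" by auto
qed

lemma gen_cancel: fixes g d A \<sigma> w \<delta> :: real
  shows "g > 0 \<Longrightarrow> d > 0 \<Longrightarrow> w > 0 \<Longrightarrow> A > 0 \<Longrightarrow> \<sigma> > 0 \<Longrightarrow> w * (g / d * \<delta> / (A * \<sigma> * w)) / g = \<delta> / (d * A * \<sigma>)"
  by (simp add: field_simps)

lemma F_eq: assumes "a < n" "b \<in> N a"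
  shows "F x a b = (if l x a - l x b > 1 / s b then (l x a - l x b) / (dd a b * \<alpha> * (1 / s a + 1 / s b)) else 0)"
proof (cases "l x a - l x b > 1 / s b")
  case False thus ?thesis unfolding F_def by (simp add: mp_eq)
next
  case True
  have b: "b < n" using assms N_sub by auto
  have sa: "s a > 0" "s b > 0" using spos assms(1) b by auto
  have dpos: "dg a > 0" "dd a b > 0" using dg_pos[OF assms(1)] dd_ge[of a b] by auto
  have wp: "w x a > 0" using active_wpos[OF assms(1) b True] .
  have ap: "\<alpha> > 0" using smx_ge1 by simp
  have sg: "1 / s a + 1 / s b > 0" using sa by (intro add_pos_pos) auto
  define \<sigma> where "\<sigma> = 1 / s a + 1 / s b"
  have "F x a b = w x a * (dg a / dd a b * (l x a - l x b) / (\<alpha> * \<sigma> * w x a)) / dg a"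
    using True unfolding F_def mp_eq \<sigma>_def by simp
  also have "\<dots> = (l x a - l x b) / (dd a b * \<alpha> * \<sigma>)"
    using dpos wp ap sg unfolding \<sigma>_def[symmetric] by (rule gen_cancel)
  finally show ?thesis using True unfolding \<sigma>_def by simp
qed

lemma F_nonneg: assumes "a < n" "b \<in> N a" shows "0 \<le> F x a b"
proof -
  have "0 \<le> mp x a b" using mp_bounds(1)[OF assms, where x=x] .
  moreover have "0 \<le> w x a" by (rule w_nonneg)
  moreover have "0 < dg a" using dg_pos[OF assms(1)] by simp
  ultimately show ?thesis unfolding F_def by simp
qed

lemma F_anti: assumes "a < n" "b \<in> N a" shows "F x a b * F x b a = 0"
proof -
  have b: "b < n" using N_sub[OF assms(2)] .
  have a: "a \<in> N b" using N_sym[OF assms(2) assms(1)] .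
  have sa: "s a > 0" "s b > 0" using spos assms(1) b by auto
  show ?thesis
  proof (cases "l x a - l x b > 1 / s b")
    case True
    moreover have "1 / s b > 0" "1 / s a > 0" using sa by simp_all
    ultimately have "\<not> l x b - l x a > 1 / s a" by linarith
    thus ?thesis using F_eq[OF b a] by simp
  next
    case False thus ?thesis using F_eq[OF assms] by simp
  qed
qed


lemma N_ne: "a < n \<Longrightarrow> N a \<noteq> {}"
  using deg_pos[of a] unfolding deg_def by auto

lemma task_exp: assumes "a < n"
  shows "measure_pmf.expectation (task_step E n s m x a) g = (\<Sum>b\<in>N a. mp x a b * g b + (1 - mp x a b) * g a) / dg a"
proof -
  have inner: "(bernoulli_pmf (mp x a b) \<bind> (\<lambda>c. return_pmf (if c then b else a))) = map_pmf (\<lambda>c. if c then b else a) (bernoulli_pmf (mp x a b))" for b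
    by (simp add: map_pmf_def)
  have "task_step E n s m x a = pmf_of_set (N a) \<bind> (\<lambda>b. map_pmf (\<lambda>c. if c then b else a) (bernoulli_pmf (mp x a b)))"
    unfolding task_step_def inner ..
  hence "measure_pmf.expectation (task_step E n s m x a) g =
     (\<Sum>b\<in>N a. measure_pmf.expectation (map_pmf (\<lambda>c. if c then b else a) (bernoulli_pmf (mp x a b))) g /\<^sub>R real (card (N a)))"
    using N_ne[OF assms] by (simp add: pmf_expectation_bind_pmf_of_set)
  also have "\<dots> = (\<Sum>b\<in>N a. (mp x a b * g b + (1 - mp x a b) * g a) / dg a)"
  proof (rule sum.cong[OF refl])
    fix b assume b: "b \<in> N a"
    have mb0: "0 \<le> mp x a b" "mp x a b \<le> 1/4" using mp_bounds[OF assms b, where x=x] by auto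
    hence mb: "0 \<le> mp x a b" "mp x a b \<le> 1" by auto
    show "measure_pmf.expectation (map_pmf (\<lambda>c. if c then b else a) (bernoulli_pmf (mp x a b))) g /\<^sub>R real (card (N a))
       = (mp x a b * g b + (1 - mp x a b) * g a) / dg a"
      using mb by (simp add: deg_def divide_inverse_commute algebra_simps)
  qed
  finally show ?thesis by (simp add: sum_divide_distrib)
qed

lemma set_task: assumes "a < n" "y \<in> set_pmf (task_step E n s m x a)" shows "y < n"
  using assms N_sub N_ne[OF assms(1)] unfolding task_step_def by (auto split: if_splits)


definition cc where "cc i = real m * s i / Stot n s"
definition tsp where "tsp x a i = measure_pmf.expectation (task_step E n s m x a) (ind i)"

lemma load_sum: "real (load m y i) = (\<Sum>k<m. ind i (y k))"
proof -
  have "{k. k < m \<and> y k = i} = {k\<in>{..<m}. y k = i}" by auto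
  hence "real (load m y i) = real (card {k\<in>{..<m}. y k = i})" unfolding load_def by simp
  also have "\<dots> = (\<Sum>k\<in>{k\<in>{..<m}. y k = i}. (1::real))" by simp
  also have "\<dots> = (\<Sum>k<m. if y k = i then 1 else 0)" by (rule sum.inter_filter) simp
  finally show ?thesis by (simp add: ind_def)
qed

lemma indsum_bound: "\<bar>(\<Sum>k<m. ind i (y k)) - c\<bar> \<le> real m + \<bar>c\<bar>"
proof -
  have "0 \<le> (\<Sum>k<m. ind i (y k))" by (intro sum_nonneg) (simp add: ind_def)
  moreover have "(\<Sum>k<m. ind i (y k)) \<le> (\<Sum>k<m. (1::real))" by (intro sum_mono) (simp add: ind_def)
  ultimately show ?thesis by simp
qed

lemma sq_term_bound: assumes "i < n"
  shows "\<bar>((\<Sum>k<m. ind i (y k)) - c)^2 / s i\<bar> \<le> (real m + \<bar>c\<bar>)^2 / s i"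
proof -
  have sp: "s i > 0" using spos assms by auto
  have "((\<Sum>k<m. ind i (y k)) - c)^2 = \<bar>(\<Sum>k<m. ind i (y k)) - c\<bar>^2" by simp
  also have "\<dots> \<le> (real m + \<bar>c\<bar>)^2" by (intro power_mono indsum_bound) simp
  finally have "((\<Sum>k<m. ind i (y k)) - c)^2 / s i \<le> (real m + \<bar>c\<bar>)^2 / s i"
    using sp by (simp add: divide_right_mono)
  thus ?thesis using sp by simp
qed

lemma Psi0_sum: "Psi0 n s m y = (\<Sum>i<n. ((\<Sum>k<m. ind i (y k)) - cc i)^2 / s i)"
  unfolding Psi0_def load_sum cc_def ..

definition PB where "PB = (\<Sum>i<n. (real m + \<bar>cc i\<bar>)^2 / s i)"

lemma Psi0_bound: "\<bar>Psi0 n s m y\<bar> \<le> PB"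
  unfolding Psi0_sum PB_def
  by (rule order_trans[OF sum_abs sum_mono]) (use sq_term_bound in auto)

lemma Psi_exp:
  "measure_pmf.expectation (round_step E n s m x) (Psi0 n s m) =
     (\<Sum>i<n. (((\<Sum>k<m. tsp x (x k) i) - cc i)^2 + (\<Sum>k<m. tsp x (x k) i * (1 - tsp x (x k) i))) / s i)"
proof -
  let ?M = "Pi_pmf {..<m} 0 (\<lambda>k. task_step E n s m x (x k))"
  have "measure_pmf.expectation (round_step E n s m x) (Psi0 n s m) =
        measure_pmf.expectation ?M (\<lambda>y. \<Sum>i<n. ((\<Sum>k<m. ind i (y k)) - cc i)^2 / s i)"
    unfolding round_step_def Psi0_sum ..
  also have "\<dots> = (\<Sum>i<n. measure_pmf.expectation ?M (\<lambda>y. ((\<Sum>k<m. ind i (y k)) - cc i)^2 / s i))"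
    by (rule Bochner_Integration.integral_sum)
       (rule int_bounded, rule sq_term_bound, simp)
  also have "\<dots> = (\<Sum>i<n. measure_pmf.expectation ?M (\<lambda>y. ((\<Sum>k<m. ind i (y k)) - cc i)^2) / s i)"
    by simp
  also have "\<dots> = (\<Sum>i<n. (((\<Sum>k<m. tsp x (x k) i) - cc i)^2 + (\<Sum>k<m. tsp x (x k) i * (1 - tsp x (x k) i))) / s i)"
    by (intro sum.cong refl) (simp add: exp_sq_count tsp_def)
  finally show ?thesis .
qed


lemma tsp_eq: assumes "a < n"
  shows "tsp x a i = (\<Sum>b\<in>N a. mp x a b * ind i b + (1 - mp x a b) * ind i a) / dg a"
  unfolding tsp_def by (rule task_exp[OF assms])

lemma tsp_bounds: assumes "a < n" shows "0 \<le> tsp x a i" "tsp x a i \<le> 1"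
proof -
  have mb: "\<And>b. b \<in> N a \<Longrightarrow> 0 \<le> mp x a b \<and> mp x a b \<le> 1"
    using mp_bounds[OF assms, where x=x] by fastforce
  have t0: "\<And>b. b \<in> N a \<Longrightarrow> 0 \<le> mp x a b * ind i b + (1 - mp x a b) * ind i a"
    using mb by (auto simp: ind_def)
  have t1: "\<And>b. b \<in> N a \<Longrightarrow> mp x a b * ind i b + (1 - mp x a b) * ind i a \<le> 1"
    using mb by (auto simp: ind_def)
  have dp: "dg a > 0" using dg_pos[OF assms] by simp
  have "0 \<le> (\<Sum>b\<in>N a. mp x a b * ind i b + (1 - mp x a b) * ind i a)" by (intro sum_nonneg t0)
  thus "0 \<le> tsp x a i" unfolding tsp_eq[OF assms] using dp by simp
  have "(\<Sum>b\<in>N a. mp x a b * ind i b + (1 - mp x a b) * ind i a) \<le> (\<Sum>b\<in>N a. 1)" by (intro sum_mono t1)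
  hence "(\<Sum>b\<in>N a. mp x a b * ind i b + (1 - mp x a b) * ind i a) \<le> dg a" by (simp add: deg_def)
  thus "tsp x a i \<le> 1" unfolding tsp_eq[OF assms] using dp by simp
qed

lemma w_tsp: assumes "a < n"
  shows "w x a * tsp x a i = (\<Sum>b\<in>N a. F x a b * ind i b) + (if a = i then w x a - (\<Sum>b\<in>N a. F x a b) else 0)"
proof -
  have dp: "dg a > 0" using dg_pos[OF assms] by simp
  have "w x a * tsp x a i = (\<Sum>b\<in>N a. F x a b * ind i b + ind i a * (w x a / dg a - F x a b))"
    unfolding tsp_eq[OF assms] F_def
    by (simp add: sum_distrib_left sum_divide_distrib add_divide_distrib diff_divide_distrib algebra_simps)
  also have "\<dots> = (\<Sum>b\<in>N a. F x a b * ind i b) + ind i a * (w x a - (\<Sum>b\<in>N a. F x a b))"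
    using dp N_ne[OF assms] by (simp add: sum.distrib sum_distrib_left[symmetric] sum_subtractf deg_def)
  finally show ?thesis by (simp add: ind_def)
qed

lemma w_tsp_self: assumes "a < n"
  shows "w x a * tsp x a a = w x a - (\<Sum>b\<in>N a. F x a b)"
proof -
  have "(\<Sum>b\<in>N a. F x a b * ind a b) = 0" by (intro sum.neutral) (auto simp: ind_def dest: N_irr)
  thus ?thesis using w_tsp[OF assms, where i=a] by simp
qed

lemma ind_sum: assumes "finite A" "i \<in> A" shows "(\<Sum>a\<in>A. ind i a * G a) = (G i :: real)"
proof -
  have "(\<Sum>a\<in>A. ind i a * G a) = (\<Sum>a\<in>A. if a = i then G a else 0)"
    by (intro sum.cong) (auto simp: ind_def)
  thus ?thesis using assms by simp
qed

lemma sum_F_in: assumes "i < n"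
  shows "(\<Sum>a<n. \<Sum>b\<in>N a. F x a b * ind i b) = (\<Sum>b\<in>N i. F x b i)"
proof -
  have "(\<Sum>a<n. \<Sum>b\<in>N a. F x a b * ind i b) = PS (\<lambda>a b. F x a b * ind i b)" unfolding PS_def ..
  also have "\<dots> = PS (\<lambda>a b. F x b a * ind i a)" by (rule PS_swap)
  also have "\<dots> = (\<Sum>a<n. ind i a * (\<Sum>b\<in>N a. F x b a))" unfolding PS_def
    by (simp add: sum_distrib_left mult.commute)
  also have "\<dots> = (\<Sum>b\<in>N i. F x b i)" using assms by (simp add: ind_sum)
  finally show ?thesis .
qed

lemma mean_eq: assumes "i < n"
  shows "(\<Sum>a<n. w x a * tsp x a i) = w x i + (\<Sum>b\<in>N i. F x b i) - (\<Sum>b\<in>N i. F x i b)"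
proof -
  have "(\<Sum>a<n. w x a * tsp x a i) = (\<Sum>a<n. (\<Sum>b\<in>N a. F x a b * ind i b) + (if a = i then w x a - (\<Sum>b\<in>N a. F x a b) else 0))"
    by (intro sum.cong refl) (simp add: w_tsp)
  also have "\<dots> = (\<Sum>b\<in>N i. F x b i) + (w x i - (\<Sum>b\<in>N i. F x i b))"
    using assms by (simp add: sum.distrib sum_F_in)
  finally show ?thesis by simp
qed

lemma var_bound: assumes "i < n"
  shows "(\<Sum>a<n. w x a * tsp x a i * (1 - tsp x a i)) \<le> (\<Sum>b\<in>N i. F x i b) + (\<Sum>b\<in>N i. F x b i)"
proof -
  have pw: "w x a * tsp x a i * (1 - tsp x a i) \<le> w x a * tsp x a i - (if a = i then 2 * (w x i * tsp x i i) - w x i else 0)"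
    if a: "a < n" for a
  proof -
    have t: "0 \<le> tsp x a i" "tsp x a i \<le> 1" using tsp_bounds[OF a] by auto
    have wn: "0 \<le> w x a" by (rule w_nonneg)
    show ?thesis
    proof (cases "a = i")
      case True
      have "w x a * tsp x a i * (1 - tsp x a i) \<le> w x a * (1 - tsp x a i)"
        using t wn by (intro mult_right_mono) (auto intro: mult_left_le)
      thus ?thesis using True by (simp add: algebra_simps)
    next
      case False
      have "w x a * tsp x a i * (1 - tsp x a i) \<le> w x a * tsp x a i"
        using t wn by (intro mult_left_le) auto
      thus ?thesis using False by simp
    qed
  qed
  have "(\<Sum>a<n. w x a * tsp x a i * (1 - tsp x a i)) \<le> (\<Sum>a<n. w x a * tsp x a i - (if a = i then 2 * (w x i * tsp x i i) - w x i else 0))"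
    by (intro sum_mono pw) simp
  also have "\<dots> = (\<Sum>a<n. w x a * tsp x a i) - (2 * (w x i * tsp x i i) - w x i)"
    using assms by (simp add: sum_subtractf)
  also have "\<dots> = (\<Sum>b\<in>N i. F x i b) + (\<Sum>b\<in>N i. F x b i)"
    unfolding mean_eq[OF assms] w_tsp_self[OF assms] by simp
  finally show ?thesis .
qed

lemma group_sum: assumes vx: "\<forall>k<m. x k < n"
  shows "(\<Sum>k<m. g (x k)) = (\<Sum>a<n. w x a * g a)"
proof -
  have "(\<Sum>a<n. w x a * g a) = (\<Sum>a<n. \<Sum>k\<in>{k\<in>{..<m}. x k = a}. g (x k))"
  proof (intro sum.cong refl)
    fix a
    have "{k. k < m \<and> x k = a} = {k\<in>{..<m}. x k = a}" by auto
    hence "w x a = real (card {k\<in>{..<m}. x k = a})" unfolding w_def load_def by simp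
    moreover have "(\<Sum>k\<in>{k\<in>{..<m}. x k = a}. g (x k)) = (\<Sum>k\<in>{k\<in>{..<m}. x k = a}. g a)" by simp
    ultimately show "w x a * g a = (\<Sum>k\<in>{k\<in>{..<m}. x k = a}. g (x k))" by simp
  qed
  also have "\<dots> = (\<Sum>k<m. g (x k))"
    using vx by (intro sum.group) auto
  finally show ?thesis ..
qed

end


context ctx begin

definition e where "e x i = w x i - cc i"
definition DD where "DD x i = (\<Sum>b\<in>N i. F x b i - F x i b)"
definition VV where "VV x i = (\<Sum>b\<in>N i. F x i b + F x b i)"
definition del where "del x i b = l x i - l x b"

lemma EPsi_le: assumes vx: "\<forall>k<m. x k < n"
  shows "measure_pmf.expectation (round_step E n s m x) (Psi0 n s m) \<le> (\<Sum>i<n. ((e x i + DD x i)^2 + VV x i) / s i)"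
  unfolding Psi_exp
proof (rule sum_mono)
  fix i assume "i \<in> {..<n}"
  hence i: "i < n" by simp
  have sp: "s i > 0" using spos i by auto
  have m1: "(\<Sum>k<m. tsp x (x k) i) - cc i = e x i + DD x i"
  proof -
    have "(\<Sum>k<m. tsp x (x k) i) = (\<Sum>a<n. w x a * tsp x a i)" by (rule group_sum[OF vx])
    thus ?thesis unfolding mean_eq[OF i] e_def DD_def by (simp add: sum_subtractf)
  qed
  have v1: "(\<Sum>k<m. tsp x (x k) i * (1 - tsp x (x k) i)) \<le> VV x i"
    unfolding group_sum[OF vx, of "\<lambda>a. tsp x a i * (1 - tsp x a i)"] VV_def
    using var_bound[OF i, of x] by (simp add: sum.distrib mult.assoc)
  show "(((\<Sum>k<m. tsp x (x k) i) - cc i)^2 + (\<Sum>k<m. tsp x (x k) i * (1 - tsp x (x k) i))) / s i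
       \<le> ((e x i + DD x i)^2 + VV x i) / s i"
    unfolding m1 using v1 sp by (simp add: divide_right_mono)
qed

lemma Psi0_e: "Psi0 n s m x = (\<Sum>i<n. (e x i)^2 / s i)"
  unfolding Psi0_def e_def w_def cc_def ..

lemma expand: "(\<Sum>i<n. ((e x i + DD x i)^2 + VV x i) / s i) =
   Psi0 n s m x + (\<Sum>i<n. 2 * e x i * DD x i / s i) + (\<Sum>i<n. (DD x i)^2 / s i) + (\<Sum>i<n. VV x i / s i)"
proof -
  have "(\<Sum>i<n. ((e x i + DD x i)^2 + VV x i) / s i) = (\<Sum>i<n. (e x i)^2 / s i + 2 * e x i * DD x i / s i + (DD x i)^2 / s i + VV x i / s i)"
    by (intro sum.cong refl) (simp add: power2_eq_square add_divide_distrib algebra_simps)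
  thus ?thesis unfolding Psi0_e by (simp add: sum.distrib)
qed

definition Sm where "Sm = Stot n s"

lemma e_div: "i < n \<Longrightarrow> e x i / s i = l x i - real m / Sm"
  unfolding e_def l_def cc_def Sm_def using spos by (auto simp: diff_divide_distrib)

lemma T1: "(\<Sum>i<n. 2 * e x i * DD x i / s i) = - 2 * PS (\<lambda>i b. del x i b * F x i b)"
proof -
  define lt where "lt i = l x i - real m / Sm" for i
  have "(\<Sum>i<n. 2 * e x i * DD x i / s i) = (\<Sum>i<n. 2 * lt i * DD x i)"
    by (intro sum.cong refl) (simp add: lt_def e_div[symmetric])
  also have "\<dots> = 2 * (PS (\<lambda>i b. lt i * F x b i) - PS (\<lambda>i b. lt i * F x i b))"
    unfolding PS_def DD_def by (simp add: sum_distrib_left sum_subtractf right_diff_distrib mult.assoc)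
  also have "PS (\<lambda>i b. lt i * F x b i) = PS (\<lambda>i b. lt b * F x i b)" by (rule PS_swap)
  also have "2 * (PS (\<lambda>i b. lt b * F x i b) - PS (\<lambda>i b. lt i * F x i b)) = - 2 * PS (\<lambda>i b. (lt i - lt b) * F x i b)"
  proof -
    have "PS (\<lambda>i b. lt b * F x i b) - PS (\<lambda>i b. lt i * F x i b) = PS (\<lambda>i b. lt b * F x i b - lt i * F x i b)"
      by (rule PS_diff[symmetric])
    also have "\<dots> = - PS (\<lambda>i b. (lt i - lt b) * F x i b)"
      unfolding PS_def by (simp add: sum_negf[symmetric] algebra_simps)
    finally show ?thesis by simp
  qed
  also have "PS (\<lambda>i b. (lt i - lt b) * F x i b) = PS (\<lambda>i b. del x i b * F x i b)"
    by (intro PS_cong) (simp add: lt_def del_def)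
  finally show ?thesis .
qed

lemma T3: "(\<Sum>i<n. VV x i / s i) = PS (\<lambda>i b. (1 / s i + 1 / s b) * F x i b)"
proof -
  have "(\<Sum>i<n. VV x i / s i) = PS (\<lambda>i b. F x i b / s i) + PS (\<lambda>i b. F x b i / s i)"
    unfolding VV_def PS_def by (simp add: sum_divide_distrib add_divide_distrib sum.distrib)
  also have "PS (\<lambda>i b. F x b i / s i) = PS (\<lambda>i b. F x i b / s b)" by (rule PS_swap)
  finally show ?thesis by (simp add: PS_add[symmetric] algebra_simps add_divide_distrib)
qed

lemma gen2: fixes \<sigma> \<delta> d A :: real shows "\<sigma> > 0 \<Longrightarrow> \<sigma> * (\<delta> / (d * A * \<sigma>)) = \<delta> / (d * A)"
  by (simp add: field_simps)

lemma T3': "(\<Sum>i<n. VV x i / s i) = PS (\<lambda>i b. if del x i b > 1 / s b then del x i b / (dd i b * \<alpha>) else 0)"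
  unfolding T3
proof (intro PS_cong)
  fix i b assume i: "i < n" and b: "b \<in> N i"
  have bn: "b < n" using N_sub[OF b] .
  have sg: "1 / s i + 1 / s b > 0" using spos i bn by (intro add_pos_pos) auto
  have ap: "\<alpha> > 0" using smx_ge1 by simp
  have dp: "dd i b > 0" using dg_pos[OF i] dd_ge(1)[of i b] by simp
  show "(1 / s i + 1 / s b) * F x i b = (if del x i b > 1 / s b then del x i b / (dd i b * \<alpha>) else 0)"
    unfolding F_eq[OF i b] del_def using gen2[OF sg, of "l x i - l x b" "dd i b" \<alpha>] by simp
qed


lemma gen3: fixes \<sigma> \<delta> d A :: real shows "\<sigma> > 0 \<Longrightarrow> d > 0 \<Longrightarrow> A > 0 \<Longrightarrow>
  d * \<sigma> * (\<delta> / (d * A * \<sigma>))^2 = \<delta> * (\<delta> / (d * A * \<sigma>)) / A"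
  by (simp add: field_simps power2_eq_square)

lemma DD_sq: assumes i: "i < n" shows "(DD x i)^2 \<le> dg i * (\<Sum>b\<in>N i. (F x b i)^2 + (F x i b)^2)"
proof -
  have "(DD x i)^2 \<le> (\<Sum>b\<in>N i. (F x b i - F x i b)^2) * real (card (N i))"
    unfolding DD_def by (rule sum_squared_le_sum_of_squares)
  also have "(\<Sum>b\<in>N i. (F x b i - F x i b)^2) = (\<Sum>b\<in>N i. (F x b i)^2 + (F x i b)^2)"
  proof (intro sum.cong refl)
    fix b assume b: "b \<in> N i"
    have "F x i b * F x b i = 0" by (rule F_anti[OF i b])
    thus "(F x b i - F x i b)^2 = (F x b i)^2 + (F x i b)^2" by (simp add: power2_eq_square algebra_simps)
  qed
  finally show ?thesis by (simp add: deg_def mult.commute)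
qed

lemma T2: "(\<Sum>i<n. (DD x i)^2 / s i) \<le> PS (\<lambda>i b. del x i b * F x i b) / \<alpha>"
proof -
  have "(\<Sum>i<n. (DD x i)^2 / s i) \<le> (\<Sum>i<n. dg i / s i * (\<Sum>b\<in>N i. (F x b i)^2 + (F x i b)^2))"
  proof (intro sum_mono)
    fix i assume "i \<in> {..<n}" hence i: "i < n" by simp
    have sp: "s i > 0" using spos i by auto
    have "(DD x i)^2 / s i \<le> dg i * (\<Sum>b\<in>N i. (F x b i)^2 + (F x i b)^2) / s i"
      using DD_sq[OF i] sp by (simp add: divide_right_mono)
    thus "(DD x i)^2 / s i \<le> dg i / s i * (\<Sum>b\<in>N i. (F x b i)^2 + (F x i b)^2)" by simp
  qed
  also have "\<dots> = PS (\<lambda>i b. dg i / s i * (F x b i)^2) + PS (\<lambda>i b. dg i / s i * (F x i b)^2)"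
    unfolding PS_def by (simp add: sum_distrib_left sum.distrib distrib_left)
  also have "PS (\<lambda>i b. dg i / s i * (F x b i)^2) = PS (\<lambda>i b. dg b / s b * (F x i b)^2)" by (rule PS_swap)
  also have "PS (\<lambda>i b. dg b / s b * (F x i b)^2) + PS (\<lambda>i b. dg i / s i * (F x i b)^2)
     = PS (\<lambda>i b. (dg i / s i + dg b / s b) * (F x i b)^2)"
    by (simp add: PS_add[symmetric] algebra_simps)
  also have "\<dots> \<le> PS (\<lambda>i b. del x i b * F x i b / \<alpha>)"
  proof (intro PS_mono)
    fix i b assume i: "i < n" and b: "b \<in> N i"
    have bn: "b < n" using N_sub[OF b] .
    have sp: "s i > 0" "s b > 0" using spos i bn by auto
    have sg: "1 / s i + 1 / s b > 0" using sp by (intro add_pos_pos) auto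
    have ap: "\<alpha> > 0" using smx_ge1 by simp
    have dp: "dd i b > 0" using dg_pos[OF i] dd_ge(1)[of i b] by simp
    have "(dg i / s i + dg b / s b) * (F x i b)^2 \<le> (dd i b / s i + dd i b / s b) * (F x i b)^2"
      using dd_ge(1)[of i b] dd_ge(2)[where a=i and b=b] sp by (intro mult_right_mono add_mono divide_right_mono) auto
    also have "\<dots> = dd i b * (1 / s i + 1 / s b) * (F x i b)^2" by (simp add: algebra_simps)
    also have "\<dots> = del x i b * F x i b / \<alpha>"
      unfolding F_eq[OF i b] del_def using gen3[OF sg dp ap, of "l x i - l x b"] by simp
    finally show "(dg i / s i + dg b / s b) * (F x i b)^2 \<le> del x i b * F x i b / \<alpha>" .
  qed
  also have "\<dots> = PS (\<lambda>i b. del x i b * F x i b) / \<alpha>"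
    unfolding PS_def by (simp add: sum_divide_distrib)
  finally show ?thesis .
qed

lemma sum_w: assumes vx: "\<forall>k<m. x k < n" shows "(\<Sum>a<n. w x a) = real m"
  using group_sum[OF vx, of "\<lambda>_. 1"] by simp

lemma Sm_pos: "Sm > 0"
  unfolding Sm_def Stot_def using spos n2 by (intro sum_pos) (auto simp: lessThan_empty_iff)

lemma Psi_l: "Psi0 n s m x = (\<Sum>i<n. s i * (l x i - real m / Sm)^2)"
  unfolding Psi0_e
proof (intro sum.cong refl)
  fix i assume "i \<in> {..<n}" hence i: "i < n" by simp
  have sp: "s i > 0" using spos i by auto
  have "s i * (l x i - real m / Sm)^2 = s i * (e x i / s i)^2" using e_div[OF i] by simp
  also have "\<dots> = (e x i)^2 / s i" using sp by (simp add: power2_eq_square)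
  finally show "(e x i)^2 / s i = s i * (l x i - real m / Sm)^2" by simp
qed

lemma wmean: assumes vx: "\<forall>k<m. x k < n"
  shows "Psi0 n s m x \<le> (\<Sum>i<n. s i * (l x i - c)^2)"
proof -
  define \<mu> where "\<mu> = real m / Sm"
  have sl: "(\<Sum>i<n. s i * l x i) = real m"
  proof -
    have "(\<Sum>i<n. s i * l x i) = (\<Sum>i<n. w x i)"
      by (intro sum.cong refl) (use spos in \<open>auto simp: l_def\<close>)
    thus ?thesis using sum_w[OF vx] by simp
  qed
  have ss: "(\<Sum>i<n. s i) = Sm" unfolding Sm_def Stot_def ..
  have z: "(\<Sum>i<n. s i * (l x i - \<mu>)) = 0"
  proof -
    have "(\<Sum>i<n. s i * (l x i - \<mu>)) = (\<Sum>i<n. s i * l x i) - (\<Sum>i<n. s i) * \<mu>"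
      by (simp add: right_diff_distrib sum_subtractf sum_distrib_right)
    thus ?thesis using sl ss Sm_pos unfolding \<mu>_def by simp
  qed
  have "(\<Sum>i<n. s i * (l x i - c)^2) = (\<Sum>i<n. s i * (l x i - \<mu>)^2 + 2 * (\<mu> - c) * (s i * (l x i - \<mu>)) + (\<mu> - c)^2 * s i)"
    by (intro sum.cong refl) (simp add: power2_eq_square algebra_simps)
  also have "\<dots> = (\<Sum>i<n. s i * (l x i - \<mu>)^2) + 2 * (\<mu> - c) * (\<Sum>i<n. s i * (l x i - \<mu>)) + (\<mu> - c)^2 * (\<Sum>i<n. s i)"
    by (simp add: sum.distrib sum_distrib_left)
  also have "\<dots> = Psi0 n s m x + (\<mu> - c)^2 * Sm" unfolding z ss by (simp add: Psi_l \<mu>_def)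
  finally show ?thesis using Sm_pos by simp
qed

lemma pos_half: "PS (\<lambda>i b. (del x i b)^2) = 2 * PS (\<lambda>i b. if del x i b > 0 then (del x i b)^2 else 0)"
proof -
  have "PS (\<lambda>i b. (del x i b)^2) = PS (\<lambda>i b. if del x i b > 0 then (del x i b)^2 else 0) + PS (\<lambda>i b. if del x i b < 0 then (del x i b)^2 else 0)"
    by (simp add: PS_add[symmetric]) (intro PS_cong, auto)
  also have "PS (\<lambda>i b. if del x i b < 0 then (del x i b)^2 else 0) = PS (\<lambda>i b. if del x b i < 0 then (del x b i)^2 else 0)"
    by (rule PS_swap)
  also have "\<dots> = PS (\<lambda>i b. if del x i b > 0 then (del x i b)^2 else 0)"
    by (intro PS_cong) (auto simp: del_def power2_commute)
  finally show ?thesis by simp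
qed

lemma spec_bound: assumes vx: "\<forall>k<m. x k < n"
  shows "lambda2 LL * Psi0 n s m x \<le> smx * PS (\<lambda>i b. if del x i b > 0 then (del x i b)^2 else 0)"
proof -
  define c where "c = (\<Sum>i<n. l x i) / real n"
  define z where "z i = l x i - c" for i
  have zs: "(\<Sum>i<n. z i) = 0" unfolding z_def c_def using n2 by (simp add: sum_subtractf)
  have l2: "lambda2 LL \<ge> 0" by (rule spectral(1))
  have "Q z = PS (\<lambda>i b. (del x i b)^2) / 2" unfolding Q_def z_def del_def by simp
  hence Qz: "Q z = PS (\<lambda>i b. if del x i b > 0 then (del x i b)^2 else 0)" unfolding pos_half by simp
  have "Psi0 n s m x \<le> (\<Sum>i<n. s i * (z i)^2)" unfolding z_def by (rule wmean[OF vx])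
  also have "\<dots> \<le> (\<Sum>i<n. smx * (z i)^2)" using s_le by (intro sum_mono mult_right_mono) auto
  finally have "Psi0 n s m x \<le> smx * (\<Sum>i<n. (z i)^2)" by (simp add: sum_distrib_left)
  hence "lambda2 LL * Psi0 n s m x \<le> lambda2 LL * (smx * (\<Sum>i<n. (z i)^2))" using l2 by (rule mult_left_mono)
  also have "\<dots> = smx * (lambda2 LL * (\<Sum>i<n. (z i)^2))" by simp
  also have "\<dots> \<le> smx * Q z" using spectral(2)[OF zs] smx_ge1 by (intro mult_left_mono) auto
  finally show ?thesis unfolding Qz .
qed


end

lemma keyineq:
  fixes \<delta> \<sigma> d D M g :: real
  assumes dp: "\<delta> > 0" and sg: "0 < \<sigma>" "\<sigma> \<le> 2" and M: "1 \<le> M" and g: "1 \<le> g" "g \<le> d" and D: "d \<le> D"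
  shows "- 2 * (\<delta> * (\<delta> / (d * (4 * M) * \<sigma>))) + \<delta> * (\<delta> / (d * (4 * M) * \<sigma>)) / (4 * M)
         + \<delta> / (d * (4 * M)) + \<delta>^2 / (16 * D * M) \<le> 1 / (4 * M * g)"
proof -
  define X where "X = \<delta> * (\<delta> / (d * (4 * M) * \<sigma>))"
  have d0: "d > 0" "D > 0" using g D by auto
  have M0: "M > 0" using M by simp
  have X_eq: "X = \<delta>^2 / (4 * d * M * \<sigma>)" unfolding X_def by (simp add: power2_eq_square mult.commute mult.left_commute)
  have "4 * d * M * \<sigma> \<le> 8 * d * M" using sg d0 M0 by simp
  hence X0: "\<delta>^2 / (8 * d * M) \<le> X" unfolding X_eq using sg d0 M0 dp
    by (intro divide_left_mono) (auto intro!: mult_pos_pos)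
  have c1: "1 / (4 * M) \<le> 1 / 4" using M by (simp add: divide_simps)
  have Xn: "X \<ge> 0" unfolding X_eq using sg d0 M0 by simp
  have "- 2 * X + X / (4 * M) = - (2 - 1 / (4 * M)) * X" by (simp add: algebra_simps)
  also have "\<dots> \<le> - (7 / 4) * X" using c1 Xn by (intro mult_right_mono) auto
  also have "\<dots> \<le> - (7 / 4) * (\<delta>^2 / (8 * d * M))" using X0 by linarith
  finally have t1: "- 2 * X + X / (4 * M) \<le> - (7 / 4) * (\<delta>^2 / (8 * d * M))" .
  have t2: "\<delta>^2 / (16 * D * M) \<le> \<delta>^2 / (16 * d * M)"
    using D d0 M0 by (intro divide_left_mono) auto
  have "- 2 * X + X / (4 * M) + \<delta> / (d * (4 * M)) + \<delta>^2 / (16 * D * M)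
        \<le> - (7 / 4) * (\<delta>^2 / (8 * d * M)) + \<delta> / (d * (4 * M)) + \<delta>^2 / (16 * d * M)"
    using t1 t2 by linarith
  also have "\<dots> = (- (5 / 32) * \<delta>^2 + \<delta> / 4) / (d * M)"
    using d0 M0 by (simp add: field_simps power2_eq_square)
  also have "\<dots> \<le> (1 / 10) / (d * M)"
  proof -
    have "0 \<le> (5 / 32) * (\<delta> - 4 / 5)^2" by simp
    hence q: "- (5 / 32) * \<delta>^2 + \<delta> / 4 \<le> 1 / 10" by (simp add: power2_eq_square algebra_simps)
    show ?thesis by (rule divide_right_mono[OF q]) (use d0 M0 in simp)
  qed
  also have "\<dots> \<le> 1 / (4 * M * g)"
  proof -
    have "4 * M * g \<le> 10 * (d * M)" using g M0 d0 by (simp add: mult_right_mono)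
    thus ?thesis using g M0 d0 by (simp add: divide_simps)
  qed
  finally show ?thesis unfolding X_def .
qed

context ctx begin

lemma pair_bound: assumes i: "i < n" and b: "b \<in> N i"
  shows "- 2 * (del x i b * F x i b) + del x i b * F x i b / \<alpha>
     + (if del x i b > 1 / s b then del x i b / (dd i b * \<alpha>) else 0)
     + (if del x i b > 0 then (del x i b)^2 else 0) / (16 * \<Delta> * smx) \<le> 1 / (4 * smx * dg i)"
proof -
  have bn: "b < n" using N_sub[OF b] .
  have sp: "s i \<ge> 1" "s b \<ge> 1" using s_ge1 i bn by auto
  have M: "1 \<le> smx" by (rule smx_ge1)
  have g: "1 \<le> dg i" "dg i \<le> dd i b" using dg_pos[OF i] dd_ge(1) by auto
  have D: "dd i b \<le> \<Delta>" using dd_le[OF i bn] .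
  show ?thesis
  proof (cases "del x i b > 1 / s b")
    case True
    have dp: "del x i b > 0" using True sp by (smt (verit) divide_pos_pos)
    have "1 / s i \<le> 1" "1 / s b \<le> 1" "0 < 1 / s i" "0 < 1 / s b" using sp by simp_all
    hence sg: "0 < 1 / s i + 1 / s b" "1 / s i + 1 / s b \<le> 2" by linarith+
    have Fe: "F x i b = del x i b / (dd i b * (4 * smx) * (1 / s i + 1 / s b))"
      using True unfolding F_eq[OF i b] del_def by simp
    have "del x i b / (dd i b * \<alpha>) = del x i b / (dd i b * (4 * smx))" by simp
    show ?thesis using keyineq[OF dp sg M g D] True dp unfolding Fe by (simp add: power2_eq_square mult.assoc)
  next
    case False
    hence F0: "F x i b = 0" unfolding F_eq[OF i b] del_def by simp
    show ?thesis
    proof (cases "del x i b > 0")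
      case True
      have d1: "del x i b \<le> 1" using False sp by (smt (verit) divide_le_eq_1)
      have "(del x i b)^2 \<le> 1" using True d1 by (simp add: power_le_one)
      hence "(del x i b)^2 / (16 * \<Delta> * smx) \<le> 1 / (16 * \<Delta> * smx)"
        using D g M by (intro divide_right_mono) auto
      also have "\<dots> \<le> 1 / (4 * smx * dg i)"
        using D g M by (intro divide_left_mono) (auto intro!: mult_pos_pos)
      finally show ?thesis using F0 False True by simp
    next
      case f2: False
      have "0 \<le> 1 / (4 * smx * dg i)" using g M by simp
      thus ?thesis using F0 False f2 by simp
    qed
  qed
qed


lemma PS_div: "PS (\<lambda>i j. f i j / c) = PS f / c"
  unfolding PS_def by (simp add: sum_divide_distrib)

lemma Delta_pos: "\<Delta> \<ge> 1" using deg_le[of 0] dg_pos[of 0] n2 by simp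

lemma PS_deg: "PS (\<lambda>i b. 1 / (4 * smx * dg i)) = real n / (4 * smx)"
proof -
  have "PS (\<lambda>i b. 1 / (4 * smx * dg i)) = (\<Sum>i<n. dg i * (1 / (4 * smx * dg i)))"
    unfolding PS_def by (simp add: deg_def)
  also have "\<dots> = (\<Sum>i<n. 1 / (4 * smx))"
  proof (intro sum.cong refl)
    fix i assume "i \<in> {..<n}"
    hence "dg i > 0" using dg_pos[of i] by simp
    moreover have "smx > 0" using smx_ge1 by simp
    ultimately show "dg i * (1 / (4 * smx * dg i)) = 1 / (4 * smx)" by (simp add: field_simps)
  qed
  finally show ?thesis by simp
qed

lemma step_bound: assumes vx: "\<forall>k<m. x k < n"
  shows "measure_pmf.expectation (round_step E n s m x) (Psi0 n s m)
    \<le> (1 - 2 / (32 * \<Delta> * smx^2 / lambda2 LL)) * Psi0 n s m x + real n / (4 * smx)"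
proof -
  define A where "A = PS (\<lambda>i b. del x i b * F x i b)"
  define B where "B = PS (\<lambda>i b. if del x i b > 1 / s b then del x i b / (dd i b * \<alpha>) else 0)"
  define C where "C = PS (\<lambda>i b. if del x i b > 0 then (del x i b)^2 else 0)"
  define P where "P = Psi0 n s m x"
  define K where "K = 16 * \<Delta> * smx"
  have Kp: "K > 0" unfolding K_def using Delta_pos smx_ge1 by simp
  have E1: "measure_pmf.expectation (round_step E n s m x) (Psi0 n s m) \<le> P - 2 * A + A / \<alpha> + B"
  proof -
    have "measure_pmf.expectation (round_step E n s m x) (Psi0 n s m) \<le> (\<Sum>i<n. ((e x i + DD x i)^2 + VV x i) / s i)"
      by (rule EPsi_le[OF vx])
    also have "\<dots> = P + (- 2 * A) + (\<Sum>i<n. (DD x i)^2 / s i) + B"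
      unfolding expand T1 T3' A_def B_def P_def ..
    also have "\<dots> \<le> P + (- 2 * A) + A / \<alpha> + B" using T2[of x] unfolding A_def by simp
    finally show ?thesis by simp
  qed
  have g2: "2 / (32 * \<Delta> * smx^2 / lambda2 LL) = lambda2 LL / (K * smx)"
    unfolding K_def by (simp add: divide_divide_eq_right power2_eq_square)
  have E2: "2 / (32 * \<Delta> * smx^2 / lambda2 LL) * P \<le> C / K"
  proof -
    have "2 / (32 * \<Delta> * smx^2 / lambda2 LL) * P = (lambda2 LL * P) / (K * smx)" unfolding g2 by simp
    also have "\<dots> \<le> (smx * C) / (K * smx)"
      using spec_bound[OF vx] Kp smx_ge1 unfolding P_def C_def by (intro divide_right_mono) auto
    also have "\<dots> = C / K" using smx_ge1 by simp
    finally show ?thesis .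
  qed
  have E3: "- 2 * A + A / \<alpha> + B + C / K \<le> real n / (4 * smx)"
  proof -
    have "- 2 * A + A / \<alpha> + B + C / K = PS (\<lambda>i b. - 2 * (del x i b * F x i b) + del x i b * F x i b / \<alpha>
     + (if del x i b > 1 / s b then del x i b / (dd i b * \<alpha>) else 0)
     + (if del x i b > 0 then (del x i b)^2 else 0) / K)"
      unfolding A_def B_def C_def by (simp only: PS_add PS_cmult PS_div)
    also have "\<dots> \<le> PS (\<lambda>i b. 1 / (4 * smx * dg i))"
      unfolding K_def by (intro PS_mono pair_bound)
    finally show ?thesis unfolding PS_deg .
  qed
  show ?thesis using E1 E2 E3 unfolding P_def[symmetric] by (simp add: algebra_simps)
qed


lemma support: assumes "\<forall>x \<in> set_pmf mu0. \<forall>k<m. x k < n"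
  shows "\<forall>x \<in> set_pmf (state_dist E n s m mu0 t). \<forall>k<m. x k < n"
proof (induction t)
  case 0 thus ?case using assms by simp
next
  case (Suc t)
  show ?case
  proof (intro ballI allI impI)
    fix y k assume y: "y \<in> set_pmf (state_dist E n s m mu0 (Suc t))" and k: "k < m"
    then obtain x where x: "x \<in> set_pmf (state_dist E n s m mu0 t)" and yx: "y \<in> set_pmf (round_step E n s m x)"
      by auto
    have xk: "x k < n" using Suc.IH x k by auto
    have "y \<in> PiE_dflt {..<m} 0 (set_pmf \<circ> (\<lambda>k. task_step E n s m x (x k)))"
      using yx unfolding round_step_def by (simp add: set_Pi_pmf)
    hence "y k \<in> set_pmf (task_step E n s m x (x k))" using k by (auto simp: PiE_dflt_def)
    thus "y k < n" using set_task[OF xk] by auto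
  qed
qed

lemma exp_abs_le: fixes f :: "'a \<Rightarrow> real" assumes "\<And>x. \<bar>f x\<bar> \<le> B"
  shows "\<bar>measure_pmf.expectation p f\<bar> \<le> B"
proof -
  have i: "integrable (measure_pmf p) f" by (rule int_bounded[OF assms])
  have "measure_pmf.expectation p f \<le> measure_pmf.expectation p (\<lambda>_. B)"
    using assms by (intro integral_mono i) (auto simp: abs_le_iff)
  moreover have "measure_pmf.expectation p (\<lambda>_. -B) \<le> measure_pmf.expectation p f"
  proof (intro integral_mono i)
    fix x show "- B \<le> f x" using assms[of x] by linarith
  qed simp
  ultimately show ?thesis by simp
qed

lemma main_step: assumes "\<forall>x \<in> set_pmf mu0. \<forall>k<m. x k < n"
  shows "measure_pmf.expectation (state_dist E n s m mu0 (Suc t)) (Psi0 n s m)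
    \<le> (1 - 2 / (32 * \<Delta> * smx^2 / lambda2 LL)) * measure_pmf.expectation (state_dist E n s m mu0 t) (Psi0 n s m)
       + real n / (4 * smx)"
proof -
  define \<mu> where "\<mu> = state_dist E n s m mu0 t"
  define c where "c = 1 - 2 / (32 * \<Delta> * smx^2 / lambda2 LL)"
  define d where "d = real n / (4 * smx)"
  have sup: "\<forall>x \<in> set_pmf \<mu>. \<forall>k<m. x k < n" unfolding \<mu>_def by (rule support[OF assms])
  have "measure_pmf.expectation (state_dist E n s m mu0 (Suc t)) (Psi0 n s m)
     = measure_pmf.expectation \<mu> (\<lambda>x. measure_pmf.expectation (round_step E n s m x) (Psi0 n s m))"
    unfolding \<mu>_def by (simp add: expectation_bind_bounded[OF Psi0_bound])
  also have "\<dots> \<le> measure_pmf.expectation \<mu> (\<lambda>x. c * Psi0 n s m x + d)"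
  proof (rule integral_mono_AE)
    show "integrable (measure_pmf \<mu>) (\<lambda>x. measure_pmf.expectation (round_step E n s m x) (Psi0 n s m))"
      by (rule int_bounded[where B=PB]) (rule exp_abs_le[OF Psi0_bound])
    show "integrable (measure_pmf \<mu>) (\<lambda>x. c * Psi0 n s m x + d)"
      by (intro Bochner_Integration.integrable_add integrable_mult_right int_bounded[OF Psi0_bound]) simp
    show "AE x in measure_pmf \<mu>. measure_pmf.expectation (round_step E n s m x) (Psi0 n s m) \<le> c * Psi0 n s m x + d"
      using sup unfolding c_def d_def by (intro AE_pmfI step_bound) auto
  qed
  also have "\<dots> = c * measure_pmf.expectation \<mu> (Psi0 n s m) + d"
    using int_bounded[OF Psi0_bound, of \<mu>] by simp
  finally show ?thesis unfolding c_def d_def \<mu>_def .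
qed

end

theorem lemma14:
  fixes E :: "nat \<Rightarrow> nat \<Rightarrow> bool" and n m t :: nat and s :: "nat \<Rightarrow> real"
    and mu0 :: "(nat \<Rightarrow> nat) pmf" and gamma :: real
  assumes "n \<ge> 2"
    and "simple_graph E n"
    and "graph_connected E n"
    and "\<forall>i<n. s i > 0"
    and "Min (s ` {..<n}) = 1"
    and "\<forall>x \<in> set_pmf mu0. \<forall>k<m. x k < n"
    and "gamma = 32 * real (max_deg E n) * (smax n s)\<^sup>2 / lambda2 (laplacian E n)"
    and "t \<ge> 1"
  shows "measure_pmf.expectation (state_dist E n s m mu0 t) (Psi0 n s m)
    \<le> (1 - 2 / gamma) * measure_pmf.expectation (state_dist E n s m mu0 (t - 1)) (Psi0 n s m)
       + real n / (4 * smax n s)"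
proof -
  interpret ctx E n s m
    by unfold_locales (use assms in auto)
  obtain t' where t: "t = Suc t'" using assms(8) by (cases t) auto
  show ?thesis unfolding t assms(7) using main_step[OF assms(6), of t'] by simp
qed



end
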